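(* For all integers $n\ge1$, $k\ge0$ and every sequence $\boldsymbol a$ of positive reals, \[ \theta_{n;k}(t)=\frac1{k!}B_k\big(x_1,\dots,x_k\big),\qquad x_\ell=(\ell-1)!\,A_n(\ell)\big(t^\ell-(t-1)^\ell\big), \] equivalently \[ \theta_{n;k}(t)=\sum_{\substack{m_1,m_2,\ldots\ge0\\ m_1+2m_2+3m_3+\cdots=k}}\ \prod_{i\ge1}\frac{1}{m_i!}\Big(\frac{A_n(i)\,(t^i-(t-1)^i)}{i}\Big)^{m_i}. \]
   Context: Let $\boldsymbol a=(a_j)_{j\ge1}$ be a sequence of positive reals. For integers $n\ge1$, $k\ge0$ let $\mathcal M_{n,k}=\{(\ell_1,\dots,\ell_k)\in\mathbb N^k: n\ge\ell_1\ge\cdots\ge\ell_k\ge1\}$. For $\vec\ell\in\mathcal M_{n,k}$ let $\sigma(\vec\ell)=|\{1\le j\le k-1:\ell_j=\ell_{j+1}\}|$ and $w(\vec\ell)=\prod_{j=1}^k a_{\ell_j}$. Define $\theta_{n;k}(t)=\sum_{\vec\ell\in\mathcal M_{n,k}}w(\vec\ell)\,t^{\sigma(\vec\ell)}$, with $\theta_{n;0}(t)=1$, and $A_n(j)=\sum_{m=1}^n a_m^j$. The complete Bell polynomials $B_j$ are defined by $\exp\big(\sum_{\ell\ge1}x_\ell z^\ell/\ell!\big)=\sum_{j\ge0}B_j(x_1,\dots,x_j)z^j/j!$. *)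

theory Defs
  imports Complex_Main "HOL-Computational_Algebra.Formal_Power_Series"
begin

text \<open>The index set M_{n,k}: weakly decreasing tuples (l_1,...,l_k) with n >= l_1 and l_k >= 1,
  represented as functions nat => nat supported on {1..k} (value 0 outside).\<close>
definition Mset :: "nat \<Rightarrow> nat \<Rightarrow> (nat \<Rightarrow> nat) set" where
  "Mset n k = {l. (\<forall>j\<in>{1..k}. 1 \<le> l j \<and> l j \<le> n)
                 \<and> (\<forall>j\<in>{1..<k}. l (j+1) \<le> l j)
                 \<and> (\<forall>j. j \<notin> {1..k} \<longrightarrow> l j = 0)}"

definition sigma_ties :: "nat \<Rightarrow> (nat \<Rightarrow> nat) \<Rightarrow> nat" where
  "sigma_ties k l = card {j \<in> {1..<k}. l j = l (j+1)}"

definition weight :: "(nat \<Rightarrow> real) \<Rightarrow> nat \<Rightarrow> (nat \<Rightarrow> nat) \<Rightarrow> real" where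
  "weight a k l = (\<Prod>j=1..k. a (l j))"

definition theta :: "(nat \<Rightarrow> real) \<Rightarrow> nat \<Rightarrow> nat \<Rightarrow> real \<Rightarrow> real" where
  "theta a n k t = (\<Sum>l\<in>Mset n k. weight a k l * t ^ sigma_ties k l)"

definition Apow :: "(nat \<Rightarrow> real) \<Rightarrow> nat \<Rightarrow> nat \<Rightarrow> real" where
  "Apow a n j = (\<Sum>m=1..n. a m ^ j)"

text \<open>Complete Bell polynomials via the generating function
  exp(\<Sum>_{l\<ge>1} x_l z^l / l!) = \<Sum>_j B_j(x_1,...,x_j) z^j / j!  (formal power series).\<close>
definition bell_gen :: "(nat \<Rightarrow> real) \<Rightarrow> real fps" where
  "bell_gen x = fps_exp 1 oo Abs_fps (\<lambda>l. if l = 0 then 0 else x l / fact l)"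

definition complete_bell :: "nat \<Rightarrow> (nat \<Rightarrow> real) \<Rightarrow> real" where
  "complete_bell j x = fact j * fps_nth (bell_gen x) j"

end

theory Submission
  imports Defs
begin

unbundle fps_syntax



lemma rec_unique:
  fixes e f c :: "nat \<Rightarrow> real"
  assumes "e 0 = f 0"
   and "\<And>k. real (k+1) * e (k+1) = (\<Sum>i=0..k. e i * c (k-i))"
   and "\<And>k. real (k+1) * f (k+1) = (\<Sum>i=0..k. f i * c (k-i))"
  shows "e k = f k"
proof (induction k rule: less_induct)
  case (less k) show ?case
  proof (cases k)
    case 0 then show ?thesis using assms(1) by simp
  next
    case (Suc j)
    have "(\<Sum>i=0..j. e i * c (j-i)) = (\<Sum>i=0..j. f i * c (j-i))"
      by (intro sum.cong) (use less Suc in auto)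
    hence "real (j+1) * e (j+1) = real (j+1) * f (j+1)" using assms(2,3) by simp
    then show ?thesis using Suc by (simp del: of_nat_Suc)
  qed
qed

lemma deriv_rec:
  fixes F G :: "real fps"
  assumes "fps_deriv F = F * G"
  shows "real (k+1) * F $ (k+1) = (\<Sum>i=0..k. F $ i * G $ (k-i))"
  using arg_cong[OF assms, of "\<lambda>h. h $ k"] by (simp add: fps_mult_nth)

definition Lx :: "(nat \<Rightarrow> real) \<Rightarrow> real fps" where
  "Lx x = Abs_fps (\<lambda>l. if l = 0 then 0 else x l / fact l)"

lemma bell_gen_0: "bell_gen x  $  0 = 1"
  by (simp add: bell_gen_def)

lemma bell_gen_deriv: "fps_deriv (bell_gen x) = bell_gen x * fps_deriv (Lx x)"
proof -
  have "Lx x  $  0 = 0" by (simp add: Lx_def)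
  then show ?thesis unfolding bell_gen_def Lx_def[symmetric]
    by (simp add: fps_compose_deriv)
qed



definition SS :: "nat \<Rightarrow> nat \<Rightarrow> (nat \<Rightarrow> nat) set" where
  "SS K k = {m. (\<forall>i. i \<notin> {1..K} \<longrightarrow> m i = 0) \<and> (\<Sum>i=1..K. i * m i) = k}"

definition tm :: "(nat \<Rightarrow> real) \<Rightarrow> nat \<Rightarrow> (nat \<Rightarrow> nat) \<Rightarrow> real" where
  "tm y K m = (\<Prod>i=1..K. (1 / fact (m i)) * y i ^ m i)"

definition PS :: "(nat \<Rightarrow> real) \<Rightarrow> nat \<Rightarrow> nat \<Rightarrow> real" where
  "PS y K k = (\<Sum>m\<in>SS K k. tm y K m)"

lemma SS_le: "m \<in> SS K k \<Longrightarrow> i \<in> {1..K} \<Longrightarrow> i * m i \<le> k"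
  unfolding SS_def using member_le_sum[of i "{1..K}" "\<lambda>i. i * m i"] by auto

lemma finite_SS: "finite (SS K k)"
proof -
  have "SS K k \<subseteq> {m. \<forall>x. (x \<in> {1..K} \<longrightarrow> m x \<in> {0..k}) \<and> (x \<notin> {1..K} \<longrightarrow> m x = 0)}"
  proof (safe)
    fix m x assume m: "m \<in> SS K k" and x: "x \<in> {1..K}"
    have "x * m x \<le> k" using SS_le[OF m x] .
    moreover have "m x \<le> x * m x" using x by simp
    ultimately have "m x \<le> k" by linarith
    then show "m x \<in> {0..k}" by simp
  qed (auto simp: SS_def)
  then show ?thesis by (rule finite_subset) (rule finite_set_of_finite_funs; simp)
qed

lemma sum_upd:
  assumes "finite A" "i \<in> A"
  shows "(\<Sum>j\<in>A. j * (m(i:=v)) j) + i * m i = (\<Sum>j\<in>A. j * m j) + i * v"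
proof -
  have h1: "(\<Sum>j\<in>A. j * (m(i:=v)) j) = i * v + (\<Sum>j\<in>A-{i}. j * (m(i:=v)) j)"
    using assms by (simp add: sum.remove)
  have h2: "(\<Sum>j\<in>A. j * m j) = i * m i + (\<Sum>j\<in>A-{i}. j * m j)"
    using assms by (simp add: sum.remove)
  have h3: "(\<Sum>j\<in>A-{i}. j * (m(i:=v)) j) = (\<Sum>j\<in>A-{i}. j * m j)"
    by (intro sum.cong) auto
  show ?thesis unfolding h1 h2 h3 by (simp add: ac_simps)
qed

lemma fact_step: "1 / fact (Suc n) * z ^ (Suc n) * real (Suc n) = z * ((1::real) / fact n * z ^ n)"
proof -
  have "(fact (Suc n)::real) = real (Suc n) * fact n" by simp
  moreover have "real (Suc n) \<noteq> 0" "(fact n::real) \<noteq> 0" by auto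
  ultimately show ?thesis by (simp only: power_Suc) (simp add: field_simps del: of_nat_Suc fact_Suc)
qed

lemma tm_inc:
  assumes "i \<in> {1..K}"
  shows "tm y K (m(i := m i + 1)) * real (m i + 1) = y i * tm y K m"
proof -
  let ?g = "\<lambda>m i. (1 / fact (m i)) * y i ^ m i"
  have A: "tm y K (m(i := m i + 1)) = ?g (m(i := m i + 1)) i * (\<Prod>j\<in>{1..K}-{i}. ?g (m(i := m i + 1)) j)"
    unfolding tm_def using assms by (simp add: prod.remove)
  have B: "tm y K m = ?g m i * (\<Prod>j\<in>{1..K}-{i}. ?g m j)"
    unfolding tm_def using assms by (simp add: prod.remove)
  have C: "(\<Prod>j\<in>{1..K}-{i}. ?g (m(i := m i + 1)) j) = (\<Prod>j\<in>{1..K}-{i}. ?g m j)"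
    by (intro prod.cong) auto
  have F: "(fact (m i + 1)::real) = real (m i + 1) * fact (m i)" by simp
  have D: "?g (m(i := m i + 1)) i * real (m i + 1) = y i * ?g m i"
    using fact_step[of "m i" "y i"] by simp
  let ?P = "(\<Prod>j\<in>{1..K}-{i}. ?g m j)"
  have "tm y K (m(i := m i + 1)) * real (m i + 1) = (?g (m(i := m i + 1)) i * real (m i + 1)) * ?P"
    unfolding A C by (simp only: ac_simps)
  also have "\<dots> = y i * (?g m i * ?P)" unfolding D by (simp only: ac_simps)
  finally show ?thesis unfolding B .
qed

lemma PS_local:
  assumes i: "i \<in> {1..K}"
  shows "(\<Sum>m\<in>SS K k. real (i * m i) * tm y K m) = (if i \<le> k then real i * y i * PS y K (k-i) else 0)"
proof (cases "i \<le> k")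
  case False
  have "\<forall>m\<in>SS K k. m i = 0"
  proof
    fix m assume m: "m \<in> SS K k"
    have "i * m i \<le> k" using SS_le[OF m i] .
    then show "m i = 0" using False by (cases "m i") auto
  qed
  then show ?thesis using False by (auto intro!: sum.neutral)
next
  case True
  let ?inc = "\<lambda>m. m(i := m i + 1)"
  have fin: "finite {1..K}" by simp
  have img: "{m\<in>SS K k. 1 \<le> m i} = ?inc ` SS K (k-i)"
  proof (safe)
    fix m assume m: "m \<in> SS K k" "1 \<le> m i"
    let ?d = "m(i := m i - 1)"
    have "m = ?inc ?d" using m(2) by (auto simp: fun_eq_iff)
    moreover have "?d \<in> SS K (k-i)"
    proof -
      have "(\<Sum>j=1..K. j * ?d j) + i * m i = (\<Sum>j=1..K. j * m j) + i * (m i - 1)"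
        using sum_upd[OF fin i, of m "m i - 1"] by simp
      moreover have "(\<Sum>j=1..K. j * m j) = k" using m(1) by (simp add: SS_def)
      moreover have "i * m i = i * (m i - 1) + i" using m(2)
        by (metis add.commute le_add_diff_inverse mult_Suc_right plus_1_eq_Suc)
      ultimately have "(\<Sum>j=1..K. j * ?d j) = k - i" by linarith
      then show ?thesis using m(1) by (auto simp: SS_def)
    qed
    ultimately show "m \<in> ?inc ` SS K (k-i)" by blast
  next
    fix m assume m: "m \<in> SS K (k-i)"
    have "(\<Sum>j=1..K. j * ?inc m j) + i * m i = (\<Sum>j=1..K. j * m j) + i * (m i + 1)"
      using sum_upd[OF fin i, of m "m i + 1"] by simp
    moreover have "(\<Sum>j=1..K. j * m j) = k - i" using m by (simp add: SS_def)
    ultimately have "(\<Sum>j=1..K. j * ?inc m j) = k" using True by (simp add: algebra_simps)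
    then show "?inc m \<in> SS K k" using m i by (auto simp: SS_def)
  qed simp
  have inj: "inj_on ?inc (SS K (k-i))"
  proof (rule inj_onI)
    fix m m' :: "nat \<Rightarrow> nat" assume h: "?inc m = ?inc m'"
    show "m = m'"
    proof
      fix j show "m j = m' j" using fun_cong[OF h, of j] by (cases "j = i") auto
    qed
  qed
  have "(\<Sum>m\<in>SS K k. real (i * m i) * tm y K m) = (\<Sum>m\<in>{m\<in>SS K k. 1 \<le> m i}. real (i * m i) * tm y K m)"
    by (rule sum.mono_neutral_right) (auto simp: finite_SS)
  also have "\<dots> = (\<Sum>m\<in>SS K (k-i). real (i * ?inc m i) * tm y K (?inc m))"
    unfolding img by (rule sum.reindex[OF inj, unfolded comp_def])
  also have "\<dots> = (\<Sum>m\<in>SS K (k-i). real i * y i * tm y K m)"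
  proof (intro sum.cong refl)
    fix m assume "m \<in> SS K (k-i)"
    have "real (i * ?inc m i) * tm y K (?inc m) = real i * (tm y K (?inc m) * real (m i + 1))"
      by (simp add: algebra_simps)
    also have "\<dots> = real i * y i * tm y K m" using tm_inc[OF i, of y m] by simp
    finally show "real (i * ?inc m i) * tm y K (?inc m) = real i * y i * tm y K m" .
  qed
  also have "\<dots> = real i * y i * PS y K (k-i)" by (simp add: PS_def sum_distrib_left)
  finally show ?thesis using True by simp
qed

lemma PS_rec:
  "real k * PS y K k = (\<Sum>i=1..K. if i \<le> k then real i * y i * PS y K (k-i) else 0)"
proof -
  have "real k * PS y K k = (\<Sum>m\<in>SS K k. real k * tm y K m)" by (simp add: PS_def sum_distrib_left)
  also have "\<dots> = (\<Sum>m\<in>SS K k. (\<Sum>i=1..K. real (i * m i)) * tm y K m)"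
  proof (intro sum.cong refl)
    fix m assume "m \<in> SS K k"
    then have "k = (\<Sum>i=1..K. i * m i)" by (simp add: SS_def)
    then show "real k * tm y K m = (\<Sum>i=1..K. real (i * m i)) * tm y K m"
      by (metis of_nat_sum)
  qed
  also have "\<dots> = (\<Sum>i=1..K. \<Sum>m\<in>SS K k. real (i * m i) * tm y K m)"
    by (simp add: sum_distrib_right sum.swap[of _ "SS K k"])
  also have "\<dots> = (\<Sum>i=1..K. if i \<le> k then real i * y i * PS y K (k-i) else 0)"
    by (intro sum.cong refl PS_local)
  finally show ?thesis .
qed

lemma SS_big:
  assumes "k \<le> K" "m \<in> SS K k" "i > k" shows "m i = 0"
proof (cases "i \<in> {1..K}")
  case True
  have "i * m i \<le> k" using SS_le[OF assms(2) True] .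
  then show ?thesis using assms(3) by (cases "m i") auto
next
  case False then show ?thesis using assms(2) by (simp add: SS_def)
qed

lemma PS_indep:
  assumes "k \<le> K" shows "PS y K k = PS y k k"
proof -
  have sumeq: "(\<Sum>i=1..K. i * m i) = (\<Sum>i=1..k. i * m i)" if "\<forall>i>k. m i = 0" for m :: "nat \<Rightarrow> nat"
    by (rule sum.mono_neutral_right) (use assms that in auto)
  have prodeq: "tm y K m = tm y k m" if "\<forall>i>k. m i = 0" for m
    unfolding tm_def by (rule prod.mono_neutral_right) (use assms that in auto)
  have "SS K k = SS k k"
  proof (safe)
    fix m assume m: "m \<in> SS K k"
    have z: "\<forall>i>k. m i = 0" using SS_big[OF assms m] by blast
    show "m \<in> SS k k" using m sumeq[OF z] z by (auto simp: SS_def)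
  next
    fix m assume m: "m \<in> SS k k"
    have z: "\<forall>i>k. m i = 0" using m by (auto simp: SS_def)
    show "m \<in> SS K k" using m sumeq[OF z] z assms by (auto simp: SS_def)
  qed
  moreover have "\<forall>m\<in>SS k k. tm y K m = tm y k m"
    using prodeq by (auto simp: SS_def)
  ultimately show ?thesis unfolding PS_def by (intro sum.cong) auto
qed

lemma PS_00: "PS y 0 0 = 1"
proof -
  have "SS 0 0 = {\<lambda>_. 0}" by (auto simp: SS_def)
  then show ?thesis by (simp add: PS_def tm_def)
qed

lemma PS_rec2:
  fixes c :: "nat \<Rightarrow> real"
  assumes c: "\<And>j. c j = real (j+1) * y (j+1)"
  shows "real (k+1) * PS y (k+1) (k+1) = (\<Sum>i=0..k. PS y i i * c (k-i))"
proof -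
  have "real (k+1) * PS y (k+1) (k+1) = (\<Sum>i=1..k+1. real i * y i * PS y (k+1) (k+1-i))"
    using PS_rec[of "k+1" y "k+1"] by (simp del: of_nat_Suc)
  also have "\<dots> = (\<Sum>i=1..k+1. real i * y i * PS y (k+1-i) (k+1-i))"
  proof (intro sum.cong refl)
    fix i assume "i \<in> {1..k+1}"
    have "k+1-i \<le> k+1" by simp
    from PS_indep[OF this, of y] show "real i * y i * PS y (k+1) (k+1-i) = real i * y i * PS y (k+1-i) (k+1-i)" by simp
  qed
  also have "\<dots> = (\<Sum>j=0..k. c j * PS y (k-j) (k-j))"
  proof -
    have e: "{1..k+1} = {Suc 0..Suc k}" by simp
    show ?thesis unfolding e sum.shift_bounds_cl_Suc_ivl
      by (intro sum.cong refl) (simp add: c)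
  qed
  also have "\<dots> = (\<Sum>i=0..k. PS y i i * c (k-i))"
    by (subst sum.atLeastAtMost_rev) (intro sum.cong refl; simp)
  finally show ?thesis .
qed



definition Ut :: "(nat \<Rightarrow> real) \<Rightarrow> nat \<Rightarrow> nat \<Rightarrow> real \<Rightarrow> real" where
  "Ut a n k t = (\<Sum>l\<in>{l\<in>Mset n k. l 1 = n}. weight a k l * t ^ sigma_ties k l)"

lemma finite_Mset: "finite (Mset n k)"
proof -
  have "Mset n k \<subseteq> {f. \<forall>x. (x \<in> {1..k} \<longrightarrow> f x \<in> {0..n}) \<and> (x \<notin> {1..k} \<longrightarrow> f x = 0)}"
    by (auto simp: Mset_def)
  then show ?thesis by (rule finite_subset) (rule finite_set_of_finite_funs; simp)
qed

lemma Mset_dec: "l \<in> Mset n k \<Longrightarrow> 1 \<le> j \<Longrightarrow> j \<le> k \<Longrightarrow> l j \<le> l 1"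
proof (induction j)
  case 0 then show ?case by simp
next
  case (Suc j)
  show ?case
  proof (cases "j = 0")
    case True then show ?thesis by simp
  next
    case False
    have "l (j+1) \<le> l j" using Suc.prems False by (auto simp: Mset_def)
    moreover have "l j \<le> l 1" using Suc False by simp
    ultimately show ?thesis by simp
  qed
qed

lemma Mset_zero: "Mset n 0 = {\<lambda>_. 0}"
  by (auto simp: Mset_def fun_eq_iff)

lemma theta_k0: "theta a n 0 t = 1"
  by (simp add: theta_def Mset_zero weight_def sigma_ties_def)

lemma theta_n0: "theta a 0 (Suc k) t = 0"
proof -
  have "Mset 0 (Suc k) = {}" by (force simp: Mset_def)
  then show ?thesis by (simp add: theta_def)
qed

lemma Mset_split:
  assumes "1 \<le> n" shows "{l\<in>Mset n k. l 1 \<noteq> n} = Mset (n-1) k"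
proof (rule subset_antisym; rule subsetI)
  fix l assume "l \<in> {l\<in>Mset n k. l 1 \<noteq> n}"
  then have l: "l \<in> Mset n k" "l 1 \<noteq> n" by auto
  show "l \<in> Mset (n-1) k"
  proof (cases "k = 0")
    case True then show ?thesis using l by (simp add: Mset_zero)
  next
    case False
    have "l 1 \<le> n" using l False by (auto simp: Mset_def)
    then have l1: "l 1 \<le> n - 1" using l by simp
    have "\<forall>j\<in>{1..k}. l j \<le> n - 1" using Mset_dec[OF l(1)] l1 by fastforce
    then show ?thesis using l by (auto simp: Mset_def)
  qed
next
  fix l assume l: "l \<in> Mset (n-1) k"
  have 1: "l \<in> Mset n k" using l by (auto simp: Mset_def)
  have 2: "l 1 \<noteq> n"
  proof (cases "k = 0")
    case True then show ?thesis using l assms by (simp add: Mset_zero)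
  next
    case False
    then have "l 1 \<le> n - 1" using l by (auto simp: Mset_def)
    then show ?thesis using assms by simp
  qed
  show "l \<in> {l\<in>Mset n k. l 1 \<noteq> n}" using 1 2 by simp
qed

lemma theta_split:
  assumes "1 \<le> n" shows "theta a n k t = theta a (n-1) k t + Ut a n k t"
proof -
  let ?f = "\<lambda>l. weight a k l * t ^ sigma_ties k l"
  have "Mset n k = {l\<in>Mset n k. l 1 \<noteq> n} \<union> {l\<in>Mset n k. l 1 = n}" by auto
  then have "theta a n k t = sum ?f ({l\<in>Mset n k. l 1 \<noteq> n} \<union> {l\<in>Mset n k. l 1 = n})"
    unfolding theta_def by simp
  also have "\<dots> = sum ?f {l\<in>Mset n k. l 1 \<noteq> n} + sum ?f {l\<in>Mset n k. l 1 = n}"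
    by (rule sum.union_disjoint) (auto simp: finite_Mset)
  finally show ?thesis unfolding Mset_split[OF assms] theta_def Ut_def .
qed

definition sh :: "(nat \<Rightarrow> nat) \<Rightarrow> nat \<Rightarrow> nat" where
  "sh l = (\<lambda>j. if j = 0 then 0 else l (Suc j))"

definition ush :: "nat \<Rightarrow> (nat \<Rightarrow> nat) \<Rightarrow> nat \<Rightarrow> nat" where
  "ush n l = (\<lambda>j. if j = 0 then 0 else if j = 1 then n else l (j - 1))"

lemma ush_mem:
  assumes l: "l \<in> Mset n k" and n: "1 \<le> n"
  shows "ush n l \<in> Mset n (Suc k)" "ush n l 1 = n"
proof -
  have b: "\<forall>j\<in>{1..k}. 1 \<le> l j \<and> l j \<le> n" and d: "\<forall>j\<in>{1..<k}. l (j+1) \<le> l j"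
    and z: "\<forall>j. j \<notin> {1..k} \<longrightarrow> l j = 0" using l by (auto simp: Mset_def)
  have 1: "\<forall>j\<in>{1..Suc k}. 1 \<le> ush n l j \<and> ush n l j \<le> n"
  proof
    fix j assume j: "j \<in> {1..Suc k}"
    show "1 \<le> ush n l j \<and> ush n l j \<le> n"
    proof (cases "j = 1")
      case True then show ?thesis using n by (simp add: ush_def)
    next
      case False then have "j - 1 \<in> {1..k}" using j by auto
      then show ?thesis using b False j by (simp add: ush_def)
    qed
  qed
  have 2: "\<forall>j\<in>{1..<Suc k}. ush n l (j+1) \<le> ush n l j"
  proof
    fix j assume j: "j \<in> {1..<Suc k}"
    show "ush n l (j+1) \<le> ush n l j"
    proof (cases "j = 1")
      case True
      then have "1 \<in> {1..k}" using j by auto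
      then show ?thesis using b True by (simp add: ush_def)
    next
      case False then have "j - 1 \<in> {1..<k}" using j by auto
      then have "l (j - 1 + 1) \<le> l (j - 1)" using d by blast
      then show ?thesis using False j by (simp add: ush_def)
    qed
  qed
  have 3: "\<forall>j. j \<notin> {1..Suc k} \<longrightarrow> ush n l j = 0"
  proof (intro allI impI)
    fix j assume j: "j \<notin> {1..Suc k}"
    show "ush n l j = 0"
    proof (cases "j = 0")
      case False then have "j - 1 \<notin> {1..k}" "j \<noteq> 1" using j by auto
      then show ?thesis using z False by (simp add: ush_def)
    qed (simp add: ush_def)
  qed
  show "ush n l \<in> Mset n (Suc k)" using 1 2 3 by (simp add: Mset_def)
  show "ush n l 1 = n" by (simp add: ush_def)
qed

lemma sh_mem:
  assumes l: "l \<in> Mset n (Suc k)" shows "sh l \<in> Mset n k"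
proof -
  have b: "\<forall>j\<in>{1..Suc k}. 1 \<le> l j \<and> l j \<le> n" and d: "\<forall>j\<in>{1..<Suc k}. l (j+1) \<le> l j"
    and z: "\<forall>j. j \<notin> {1..Suc k} \<longrightarrow> l j = 0" using l by (auto simp: Mset_def)
  have 1: "\<forall>j\<in>{1..k}. 1 \<le> sh l j \<and> sh l j \<le> n"
  proof
    fix j assume "j \<in> {1..k}" then have "Suc j \<in> {1..Suc k}" by auto
    then show "1 \<le> sh l j \<and> sh l j \<le> n" using b \<open>j \<in> {1..k}\<close> by (simp add: sh_def)
  qed
  have 2: "\<forall>j\<in>{1..<k}. sh l (j+1) \<le> sh l j"
  proof
    fix j assume "j \<in> {1..<k}" then have "Suc j \<in> {1..<Suc k}" by auto
    then have "l (Suc j + 1) \<le> l (Suc j)" using d by blast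
    then show "sh l (j+1) \<le> sh l j" using \<open>j \<in> {1..<k}\<close> by (simp add: sh_def)
  qed
  have 3: "\<forall>j. j \<notin> {1..k} \<longrightarrow> sh l j = 0"
  proof (intro allI impI)
    fix j assume j: "j \<notin> {1..k}"
    show "sh l j = 0"
    proof (cases "j = 0")
      case False then have "Suc j \<notin> {1..Suc k}" using j by auto
      then show ?thesis using z False by (simp add: sh_def)
    qed (simp add: sh_def)
  qed
  show ?thesis using 1 2 3 by (simp add: Mset_def)
qed

lemma sh_ush: "l \<in> Mset n k \<Longrightarrow> sh (ush n l) = l"
  by (auto simp: sh_def ush_def fun_eq_iff Mset_def)

lemma ush_sh: "l \<in> Mset n (Suc k) \<Longrightarrow> l 1 = n \<Longrightarrow> ush n (sh l) = l"
proof -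
  assume l: "l \<in> Mset n (Suc k)" "l 1 = n"
  have "l 0 = 0" using l by (auto simp: Mset_def)
  then show ?thesis using l by (auto simp: sh_def ush_def fun_eq_iff)
qed

lemma image_ush:
  assumes "1 \<le> n" shows "{l\<in>Mset n (Suc k). l 1 = n} = ush n ` Mset n k"
proof (rule subset_antisym; rule subsetI)
  fix l assume "l \<in> {l\<in>Mset n (Suc k). l 1 = n}"
  then have l: "l \<in> Mset n (Suc k)" "l 1 = n" by auto
  then have "l = ush n (sh l)" using ush_sh by simp
  then show "l \<in> ush n ` Mset n k" using sh_mem[OF l(1)] by blast
next
  fix l assume "l \<in> ush n ` Mset n k"
  then obtain l' where "l' \<in> Mset n k" "l = ush n l'" by blast
  then show "l \<in> {l\<in>Mset n (Suc k). l 1 = n}" using ush_mem[OF _ assms] by auto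
qed

lemma weight_ush:
  assumes "l \<in> Mset n k" shows "weight a (Suc k) (ush n l) = a n * weight a k l"
proof -
  have "weight a (Suc k) (ush n l) = a (ush n l 1) * (\<Prod>j=Suc 1..Suc k. a (ush n l j))"
    unfolding weight_def by (rule prod.atLeast_Suc_atMost) simp
  also have "(\<Prod>j=Suc 1..Suc k. a (ush n l j)) = (\<Prod>j=1..k. a (ush n l (Suc j)))"
    by (rule prod.shift_bounds_cl_Suc_ivl)
  also have "\<dots> = weight a k l" unfolding weight_def by (intro prod.cong refl) (auto simp: ush_def)
  finally show ?thesis by (simp add: ush_def)
qed

lemma card_shift:
  "card {j \<in> {1..<Suc k}. P j} = (if 1 \<le> k \<and> P 1 then 1 else 0) + card {j\<in>{1..<k}. P (Suc j)}"
proof (induction k)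
  case 0 then show ?case by simp
next
  case (Suc k)
  have e1: "{j \<in> {1..<Suc (Suc k)}. P j} = {j \<in> {1..<Suc k}. P j} \<union> (if P (Suc k) then {Suc k} else {})"
    by (auto simp: less_Suc_eq)
  have e2: "{j \<in> {1..<Suc k}. P (Suc j)} = {j \<in> {1..<k}. P (Suc j)} \<union> (if 1 \<le> k \<and> P (Suc k) then {k} else {})"
    by (auto simp: less_Suc_eq)
  have c1: "card {j \<in> {1..<Suc (Suc k)}. P j} = card {j \<in> {1..<Suc k}. P j} + (if P (Suc k) then 1 else 0)"
    unfolding e1 by (subst card_Un_disjoint) auto
  have c2: "card {j \<in> {1..<Suc k}. P (Suc j)} = card {j \<in> {1..<k}. P (Suc j)} + (if 1 \<le> k \<and> P (Suc k) then 1 else 0)"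
    unfolding e2 by (subst card_Un_disjoint) auto
  show ?case unfolding c1 c2 Suc by (cases k) auto
qed

lemma sigma_ush:
  assumes l: "l \<in> Mset n k" and n: "1 \<le> n"
  shows "sigma_ties (Suc k) (ush n l) = sigma_ties k l + (if l 1 = n then 1 else 0)"
proof -
  have "sigma_ties (Suc k) (ush n l) = (if 1 \<le> k \<and> ush n l 1 = ush n l 2 then 1 else 0)
      + card {j\<in>{1..<k}. ush n l (Suc j) = ush n l (Suc j + 1)}"
    unfolding sigma_ties_def using card_shift[of k "\<lambda>j. ush n l j = ush n l (j+1)"] by (simp add: numeral_2_eq_2)
  also have "{j\<in>{1..<k}. ush n l (Suc j) = ush n l (Suc j + 1)} = {j\<in>{1..<k}. l j = l (j+1)}"
    by (auto simp: ush_def)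
  also have "(if 1 \<le> k \<and> ush n l 1 = ush n l 2 then 1 else 0) = (if l 1 = n then 1 else (0::nat))"
  proof (cases "k = 0")
    case True
    then have "l 1 = 0" using l by (simp add: Mset_zero)
    then show ?thesis using True n by simp
  next
    case False then show ?thesis by (auto simp: ush_def)
  qed
  finally show ?thesis unfolding sigma_ties_def by simp
qed

lemma Ut_0: assumes "1 \<le> n" shows "Ut a n 0 t = 0"
proof -
  have "{l\<in>Mset n 0. l 1 = n} = {}" using assms by (auto simp: Mset_zero)
  then show ?thesis unfolding Ut_def by (intro sum.neutral) blast
qed

lemma Ut_Suc:
  assumes n: "1 \<le> n"
  shows "Ut a n (Suc k) t = a n * (theta a (n-1) k t + t * Ut a n k t)"
proof -
  let ?f = "\<lambda>k l. weight a k l * t ^ sigma_ties k l"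
  have inj: "inj_on (ush n) (Mset n k)" by (metis inj_onI sh_ush)
  have "Ut a n (Suc k) t = (\<Sum>l\<in>Mset n k. ?f (Suc k) (ush n l))"
    unfolding Ut_def image_ush[OF n] by (rule sum.reindex[OF inj, unfolded comp_def])
  also have "\<dots> = (\<Sum>l\<in>Mset n k. a n * (if l 1 = n then t * ?f k l else ?f k l))"
  proof (intro sum.cong refl)
    fix l assume l: "l \<in> Mset n k"
    show "?f (Suc k) (ush n l) = a n * (if l 1 = n then t * ?f k l else ?f k l)"
      unfolding weight_ush[OF l] sigma_ush[OF l n] by (simp add: power_add)
  qed
  also have "\<dots> = a n * ((\<Sum>l\<in>{l\<in>Mset n k. l 1 = n}. t * ?f k l) + (\<Sum>l\<in>{l\<in>Mset n k. l 1 \<noteq> n}. ?f k l))"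
    by (simp add: sum_distrib_left[symmetric] sum.If_cases finite_Mset Collect_conj_eq Int_commute set_diff_eq Compl_eq)
  also have "\<dots> = a n * (theta a (n-1) k t + t * Ut a n k t)"
    unfolding Mset_split[OF n] by (simp add: theta_def Ut_def sum_distrib_left)
  finally show ?thesis .
qed



lemma alg1:
  fixes P U A T X :: "'a::comm_ring_1"
  assumes "U = X*(A*(P + T*U))"
  shows "(P+U)*(1 - A*T*X) = P*(1 - A*(T-1)*X)"
proof -
  have "(P+U)*(1 - A*T*X) - P*(1 - A*(T-1)*X) = U - X*(A*(P + T*U))"
    by (simp add: algebra_simps)
  also have "\<dots> = 0" using assms by simp
  finally show ?thesis by simp
qed

lemma alg2:
  fixes Q P dQ dP L l C B X :: "'a::comm_ring_1"
  assumes K: "Q*(1-C*X) = P*(1-B*X)" and dK: "Q*(-C) + dQ*(1-C*X) = P*(-B) + dP*(1-B*X)"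
    and IH: "dP = P*L" and G: "l*((1-C*X)*(1-B*X)) = C - B"
  shows "((1-C*X)*(1-B*X)) * dQ = ((1-C*X)*(1-B*X)) * (Q*(L + l))"
proof -
  have "((1-C*X)*(1-B*X)) * dQ - ((1-C*X)*(1-B*X)) * (Q*(L + l)) =
     (1-B*X)*((Q*(-C) + dQ*(1-C*X)) - (P*(-B) + dP*(1-B*X))) + (1-B*X)*(1-B*X)*(dP - P*L)
     + ((1-B*X)*L - B)*(P*(1-B*X) - Q*(1-C*X)) - Q*(l*((1-C*X)*(1-B*X)) - (C - B))"
    by (simp add: algebra_simps)
  also have "\<dots> = 0" using assms by simp
  finally show ?thesis by simp
qed

definition Th :: "(nat \<Rightarrow> real) \<Rightarrow> real \<Rightarrow> nat \<Rightarrow> real fps" where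
  "Th a t n = Abs_fps (\<lambda>k. theta a n k t)"
definition Uf :: "(nat \<Rightarrow> real) \<Rightarrow> real \<Rightarrow> nat \<Rightarrow> real fps" where
  "Uf a t n = Abs_fps (\<lambda>k. Ut a n k t)"
definition Lp :: "(nat \<Rightarrow> real) \<Rightarrow> real \<Rightarrow> nat \<Rightarrow> real fps" where
  "Lp a t n = Abs_fps (\<lambda>j. \<Sum>m=1..n. (a m * t)^(j+1) - (a m * (t-1))^(j+1))"

lemma Th0: "Th a t 0 = 1"
proof (rule fps_ext)
  fix k show "Th a t 0 $ k = 1 $ k" by (cases k) (simp_all add: Th_def theta_k0 theta_n0)
qed

lemma Lp0: "Lp a t 0 = 0"
  by (rule fps_ext) (simp add: Lp_def)

lemma Th_key:
  assumes n: "1 \<le> n"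
  shows "Th a t n * (1 - fps_const (a n) * fps_const t * fps_X)
       = Th a t (n-1) * (1 - fps_const (a n) * (fps_const t - 1) * fps_X)"
proof -
  have h1: "Th a t n = Th a t (n-1) + Uf a t n"
    by (rule fps_ext) (simp add: Th_def Uf_def theta_split[OF n])
  have h2: "Uf a t n = fps_X * (fps_const (a n) * (Th a t (n-1) + fps_const t * Uf a t n))"
  proof (rule fps_ext)
    fix k show "Uf a t n $ k = (fps_X * (fps_const (a n) * (Th a t (n-1) + fps_const t * Uf a t n))) $ k"
      by (cases k) (simp_all add: Uf_def Th_def Ut_0[OF n] Ut_Suc[OF n])
  qed
  show ?thesis unfolding h1 by (rule alg1[OF h2])
qed

lemma geo:
  fixes b c :: real
  shows "Abs_fps (\<lambda>j. c^(j+1) - b^(j+1)) * ((1 - fps_const c * fps_X) * (1 - fps_const b * fps_X))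
        = fps_const (c - b)"
proof -
  let ?l = "Abs_fps (\<lambda>j. c^(j+1) - b^(j+1))"
  have "?l * ((1 - fps_const c * fps_X) * (1 - fps_const b * fps_X))
      = ?l - fps_const (b + c) * (fps_X * ?l) + fps_const (b * c) * (fps_X^2 * ?l)"
    by (simp add: algebra_simps power2_eq_square flip: fps_const_add fps_const_mult)
  also have "\<dots> = fps_const (c - b)"
  proof (rule fps_ext)
    fix j
    show "(?l - fps_const (b + c) * (fps_X * ?l) + fps_const (b * c) * (fps_X^2 * ?l)) $ j = fps_const (c - b) $ j"
    proof (cases j)
      case 0 then show ?thesis by (simp add: fps_X_power_mult_nth)
    next
      case (Suc i) note j = this
      show ?thesis
      proof (cases i)
        case 0 then show ?thesis using j by (simp add: fps_X_power_mult_nth algebra_simps power2_eq_square)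
      next
        case (Suc m) then show ?thesis using j by (simp add: fps_X_power_mult_nth algebra_simps)
      qed
    qed
  qed
  finally show ?thesis .
qed

lemma Th_deriv: "fps_deriv (Th a t n) = Th a t n * Lp a t n"
proof (induction n)
  case 0 then show ?case by (simp add: Th0 Lp0)
next
  case (Suc n)
  let ?A = "fps_const (a (Suc n))" and ?T = "fps_const t"
  let ?C = "?A * ?T" and ?B = "?A * (?T - 1)"
  let ?Q = "Th a t (Suc n)" and ?P = "Th a t n"
  let ?l = "Abs_fps (\<lambda>j. (a (Suc n) * t)^(j+1) - (a (Suc n) * (t-1))^(j+1))"
  have K: "?Q * (1 - ?C * fps_X) = ?P * (1 - ?B * fps_X)"
    using Th_key[of "Suc n" a t] by simp
  have dl: "fps_deriv (1 - F * fps_X) = - F" if "fps_deriv F = 0" for F :: "real fps"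
    using that by simp
  have dC: "fps_deriv ?C = 0" and dB: "fps_deriv ?B = 0" by simp_all
  have "fps_deriv (?Q * (1 - ?C * fps_X)) = fps_deriv (?P * (1 - ?B * fps_X))" using K by simp
  then have dK: "?Q * (- ?C) + fps_deriv ?Q * (1 - ?C * fps_X) = ?P * (- ?B) + fps_deriv ?P * (1 - ?B * fps_X)"
    unfolding fps_deriv_mult dl[OF dC] dl[OF dB] .
  have cC: "?C = fps_const (a (Suc n) * t)" and cB: "?B = fps_const (a (Suc n) * (t - 1))"
    by (simp_all add: fps_eq_iff algebra_simps)
  have G: "?l * ((1 - ?C * fps_X) * (1 - ?B * fps_X)) = ?C - ?B"
    unfolding cC cB using geo[of "a (Suc n) * t" "a (Suc n) * (t-1)"] by simp
  have Lsuc: "Lp a t (Suc n) = Lp a t n + ?l"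
    by (rule fps_ext) (simp add: Lp_def)
  have D: "(1 - ?C * fps_X) * (1 - ?B * fps_X) \<noteq> 0"
  proof
    assume h: "(1 - ?C * fps_X) * (1 - ?B * fps_X) = 0"
    have "((1 - ?C * fps_X) * (1 - ?B * fps_X)) $ 0 = 1" by simp
    from this[unfolded h] show False by simp
  qed
  have "((1 - ?C * fps_X) * (1 - ?B * fps_X)) * fps_deriv ?Q = ((1 - ?C * fps_X) * (1 - ?B * fps_X)) * (?Q * (Lp a t n + ?l))"
    by (rule alg2[OF K dK Suc.IH G])
  then show ?case unfolding Lsuc using D by simp
qed


lemma Lp_nth: "Lp a t n $ j = Apow a n (j+1) * (t^(j+1) - (t-1)^(j+1))"
  unfolding Lp_def Apow_def fps_nth_Abs_fps sum_distrib_right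
  by (intro sum.cong refl) (simp only: power_mult_distrib, simp only: right_diff_distrib)

theorem mainTheorem3:
  fixes a :: "nat \<Rightarrow> real" and n k :: nat and t :: real
  assumes apos: "\<And>j. j \<ge> 1 \<Longrightarrow> a j > 0"
    and n1: "n \<ge> 1"
  shows "theta a n k t =
           complete_bell k (\<lambda>l. fact (l - 1) * Apow a n l * (t ^ l - (t - 1) ^ l)) / fact k
       \<and> theta a n k t =
           (\<Sum>m\<in>{m :: nat \<Rightarrow> nat. (\<forall>i. i \<notin> {1..k} \<longrightarrow> m i = 0)
                                  \<and> (\<Sum>i=1..k. i * m i) = k}.
              \<Prod>i=1..k. (1 / fact (m i)) * (Apow a n i * (t ^ i - (t - 1) ^ i) / i) ^ m i)"
proof -
  define x where "x = (\<lambda>l. fact (l - 1) * Apow a n l * (t ^ l - (t - 1) ^ l))"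
  define y where "y = (\<lambda>i::nat. Apow a n i * (t ^ i - (t - 1) ^ i) / i)"
  have c1: "Lp a t n $ j = fps_deriv (Lx x) $ j" for j
  proof -
    have "fps_deriv (Lx x) $ j = real (j+1) * (fact j * Apow a n (j+1) * (t ^ (j+1) - (t - 1) ^ (j+1))) / fact (j+1)"
      by (simp add: Lx_def x_def)
    also have "\<dots> = Apow a n (j+1) * (t ^ (j+1) - (t - 1) ^ (j+1))"
      by (simp add: field_simps del: of_nat_Suc)
    also have "\<dots> = Lp a t n $ j"
      by (rule Lp_nth[symmetric])
    finally show ?thesis by simp
  qed
  have c2: "Lp a t n $ j = real (j+1) * y (j+1)" for j
  proof -
    have "Lp a t n $ j = Apow a n (j+1) * (t ^ (j+1) - (t - 1) ^ (j+1))"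
      by (rule Lp_nth)
    then show ?thesis by (simp add: y_def del: of_nat_Suc)
  qed
  have T0: "Th a t n $ 0 = 1" by (simp add: Th_def theta_k0)
  have E1: "Th a t n $ k = bell_gen x $ k"
  proof (rule rec_unique[where c = "\<lambda>j. Lp a t n $ j"])
    show "Th a t n $ 0 = bell_gen x $ 0" using T0 bell_gen_0 by simp
    show "real (k+1) * Th a t n $ (k+1) = (\<Sum>i=0..k. Th a t n $ i * Lp a t n $ (k-i))" for k
      by (rule deriv_rec[OF Th_deriv])
    show "real (k+1) * bell_gen x $ (k+1) = (\<Sum>i=0..k. bell_gen x $ i * Lp a t n $ (k-i))" for k
      unfolding c1 by (rule deriv_rec[OF bell_gen_deriv])
  qed
  have E2: "Th a t n $ k = PS y k k"
  proof (rule rec_unique[where c = "\<lambda>j. Lp a t n $ j"])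
    show "Th a t n $ 0 = PS y 0 0" using T0 PS_00 by simp
    show "real (k+1) * Th a t n $ (k+1) = (\<Sum>i=0..k. Th a t n $ i * Lp a t n $ (k-i))" for k
      by (rule deriv_rec[OF Th_deriv])
    show "real (k+1) * PS y (k+1) (k+1) = (\<Sum>i=0..k. PS y i i * Lp a t n $ (k-i))" for k
      by (rule PS_rec2) (rule c2)
  qed
  have th: "theta a n k t = Th a t n $ k" by (simp add: Th_def)
  have 1: "theta a n k t = complete_bell k x / fact k"
    unfolding th E1 complete_bell_def by simp
  have 2: "theta a n k t = PS y k k" unfolding th E2 ..
  show ?thesis using 1 2 unfolding x_def PS_def SS_def tm_def y_def by simp
qed

end
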